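(* Let $\ell\ge 13$ be an odd integer. Let $F$ be a weighted graph with edge weight $\omega:E(F)\to\{3,4,5\}$. Assume that $F=T\cup P$, where $T$ is a spanning tree of $F$ all of whose edges have weight $3$ and $P$ is a non-spanning path with end-vertices $x$ and $y$. If $F$ has no cycle of odd weight smaller than $\ell+4$, and every $x,y$-path in $F$ has weight at least $\ell$, then $|N^1_F[P]|\ge\frac{\ell}{3}+\frac{4}{3}$.
   Context: The weight of a subgraph is the sum of the weights of its edges. $N^1_F[P]$ is the closed neighbourhood of $V(P)$ in $F$: all vertices at distance at most $1$ in $F$ from some vertex of $P$. A path is non-spanning if it does not contain all vertices of $F$. *)

theory Defs
  imports Complex_Main
begin

definition graph :: "'a set \<Rightarrow> 'a set set \<Rightarrow> bool" where
  "graph V E \<longleftrightarrow> finite V \<and> (\<forall>e\<in>E. \<exists>u v. e = {u, v} \<and> u \<noteq> v \<and> u \<in> V \<and> v \<in> V)"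

definition is_path :: "'a set set \<Rightarrow> 'a list \<Rightarrow> bool" where
  "is_path E p \<longleftrightarrow> p \<noteq> [] \<and> distinct p \<and> (\<forall>i < length p - 1. {p ! i, p ! (i + 1)} \<in> E)"

definition path_edges :: "'a list \<Rightarrow> 'a set set" where
  "path_edges p = {{p ! i, p ! (i + 1)} | i. i < length p - 1}"

definition path_weight :: "('a set \<Rightarrow> nat) \<Rightarrow> 'a list \<Rightarrow> nat" where
  "path_weight w p = (\<Sum>i < length p - 1. w {p ! i, p ! (i + 1)})"

definition is_cycle :: "'a set set \<Rightarrow> 'a list \<Rightarrow> bool" where
  "is_cycle E c \<longleftrightarrow> length c \<ge> 3 \<and> distinct c \<and>
     (\<forall>i < length c. {c ! i, c ! ((i + 1) mod length c)} \<in> E)"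

definition cycle_weight :: "('a set \<Rightarrow> nat) \<Rightarrow> 'a list \<Rightarrow> nat" where
  "cycle_weight w c = (\<Sum>i < length c. w {c ! i, c ! ((i + 1) mod length c)})"

definition connected_on :: "'a set \<Rightarrow> 'a set set \<Rightarrow> bool" where
  "connected_on V E \<longleftrightarrow> (\<forall>u\<in>V. \<forall>v\<in>V. \<exists>p. is_path E p \<and> hd p = u \<and> last p = v)"

definition spanning_tree :: "'a set \<Rightarrow> 'a set set \<Rightarrow> 'a set set \<Rightarrow> bool" where
  "spanning_tree V E T \<longleftrightarrow> T \<subseteq> E \<and> connected_on V T \<and> \<not> (\<exists>c. is_cycle T c)"

definition closed_nbhd :: "'a set \<Rightarrow> 'a set set \<Rightarrow> 'a set \<Rightarrow> 'a set" where
  "closed_nbhd V E S = S \<union> {v \<in> V. \<exists>u\<in>S. {u, v} \<in> E}"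

end

theory Submission
  imports Defs
begin


fun wk :: "'a set set \<Rightarrow> 'a list \<Rightarrow> bool" where
  "wk E [] = False"
| "wk E [v] = True"
| "wk E (u # v # r) = ({u, v} \<in> E \<and> wk E (v # r))"

fun pw :: "('a set \<Rightarrow> nat) \<Rightarrow> 'a list \<Rightarrow> nat" where
  "pw w [] = 0"
| "pw w [v] = 0"
| "pw w (u # v # r) = w {u, v} + pw w (v # r)"

lemma wk_nth: "wk E q \<longleftrightarrow> q \<noteq> [] \<and> (\<forall>i < length q - 1. {q ! i, q ! (i + 1)} \<in> E)"
proof (induction E q rule: wk.induct)
  case (3 E u v r)
  show ?case
  proof
    assume "wk E (u # v # r)"
    then show "u # v # r \<noteq> [] \<and> (\<forall>i<length (u # v # r) - 1. {(u # v # r) ! i, (u # v # r) ! (i + 1)} \<in> E)"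
      using 3 by (auto simp: nth_Cons split: nat.splits)
  next
    assume h: "u # v # r \<noteq> [] \<and> (\<forall>i<length (u # v # r) - 1. {(u # v # r) ! i, (u # v # r) ! (i + 1)} \<in> E)"
    have "{u, v} \<in> E" using h by (metis length_Cons nth_Cons_0 nth_Cons_Suc Suc_eq_plus1 zero_less_Suc diff_Suc_1)
    moreover have "\<forall>i<length (v # r) - 1. {(v # r) ! i, (v # r) ! (i + 1)} \<in> E"
    proof (intro allI impI)
      fix i assume "i < length (v # r) - 1"
      then have "Suc i < length (u # v # r) - 1" by simp
      then have "{(u # v # r) ! Suc i, (u # v # r) ! (Suc i + 1)} \<in> E" using h by blast
      then show "{(v # r) ! i, (v # r) ! (i + 1)} \<in> E" by simp
    qed
    ultimately show "wk E (u # v # r)" using 3 by simp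
  qed
qed auto

lemma pw_eq: "pw w q = (\<Sum>i < length q - 1. w {q ! i, q ! (i + 1)})"
proof (induction w q rule: pw.induct)
  case (3 w u v r)
  have "(\<Sum>i < length (u # v # r) - 1. w {(u # v # r) ! i, (u # v # r) ! (i + 1)})
      = (\<Sum>i < Suc (length (v # r) - 1). w {(u # v # r) ! i, (u # v # r) ! (i + 1)})" by simp
  also have "\<dots> = w {u, v} + (\<Sum>i < length (v # r) - 1. w {(v # r) ! i, (v # r) ! (i + 1)})"
    by (subst sum.lessThan_Suc_shift) simp
  finally show ?case using 3 by simp
qed auto

lemma is_path_wk: "is_path E q \<longleftrightarrow> wk E q \<and> distinct q"
  unfolding is_path_def wk_nth by auto

lemma path_weight_pw: "path_weight w q = pw w q"
  unfolding path_weight_def pw_eq ..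

lemma wk_append: "xs \<noteq> [] \<Longrightarrow> ys \<noteq> [] \<Longrightarrow> wk E (xs @ ys) \<longleftrightarrow> wk E xs \<and> {last xs, hd ys} \<in> E \<and> wk E ys"
proof (induction xs rule: induct_list012)
  case (2 x) then show ?case by (cases ys) auto
next
  case (3 x y zs) then show ?case by auto
qed auto

lemma pw_append: "xs \<noteq> [] \<Longrightarrow> ys \<noteq> [] \<Longrightarrow> pw w (xs @ ys) = pw w xs + w {last xs, hd ys} + pw w ys"
proof (induction xs rule: induct_list012)
  case (2 x) then show ?case by (cases ys) auto
next
  case (3 x y zs) then show ?case by auto
qed auto

lemma wk_mono: "wk E q \<Longrightarrow> E \<subseteq> E' \<Longrightarrow> wk E' q"
  by (induction E q rule: wk.induct) auto

lemma pw_T: "wk T q \<Longrightarrow> \<forall>e\<in>T. w e = 3 \<Longrightarrow> pw w q = 3 * (length q - 1)"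
  by (induction T q rule: wk.induct) auto

lemma wk_take: "wk E q \<Longrightarrow> 0 < n \<Longrightarrow> wk E (take n q)"
  unfolding wk_nth by (cases q) auto

lemma wk_drop: "wk E q \<Longrightarrow> n < length q \<Longrightarrow> wk E (drop n q)"
  unfolding wk_nth by (auto simp: add.commute add.left_commute)

lemma wk_exit: "wk E r \<Longrightarrow> hd r \<in> A \<Longrightarrow> last r \<notin> A \<Longrightarrow> \<exists>u v. {u, v} \<in> E \<and> u \<in> A \<and> v \<notin> A"
  by (induction E r rule: wk.induct) auto



lemma wk_app3:
  assumes "M \<noteq> []"
  shows "wk E (xs @ M @ zs) \<longleftrightarrow> (xs = [] \<or> wk E xs \<and> {last xs, hd M} \<in> E) \<and> wk E M \<and> (zs = [] \<or> wk E zs \<and> {last M, hd zs} \<in> E)"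
proof -
  have a: "wk E (M @ zs) \<longleftrightarrow> wk E M \<and> (zs = [] \<or> wk E zs \<and> {last M, hd zs} \<in> E)"
    using assms by (cases "zs = []") (auto simp: wk_append)
  show ?thesis
  proof (cases "xs = []")
    case True then show ?thesis using a by simp
  next
    case False
    then show ?thesis using a assms by (simp add: wk_append del: append_assoc)
  qed
qed

lemma pw_app3:
  assumes "M \<noteq> []"
  shows "pw w (xs @ M @ zs) = (if xs = [] then 0 else pw w xs + w {last xs, hd M}) + pw w M + (if zs = [] then 0 else w {last M, hd zs} + pw w zs)"
proof -
  have a: "pw w (M @ zs) = pw w M + (if zs = [] then 0 else w {last M, hd zs} + pw w zs)"
    using assms by (cases "zs = []") (auto simp: pw_append)
  show ?thesis
  proof (cases "xs = []")
    case True then show ?thesis using a by simp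
  next
    case False
    then show ?thesis using a assms by (simp add: pw_append del: append_assoc)
  qed
qed

lemma walk_to_path:
  "wk E q \<Longrightarrow> \<exists>p. wk E p \<and> distinct p \<and> hd p = hd q \<and> last p = last q \<and> set p \<subseteq> set q \<and> pw w p \<le> pw w q"
proof (induction "length q" arbitrary: q rule: less_induct)
  case less
  show ?case
  proof (cases "distinct q")
    case True then show ?thesis using less.prems by blast
  next
    case False
    then obtain xs y ys zs where q: "q = xs @ [y] @ ys @ [y] @ zs"
      using not_distinct_decomp by blast
    define M where "M = y # ys @ [y]"
    have qM: "q = xs @ M @ zs" using q M_def by simp
    have M: "M \<noteq> []" "hd M = y" "last M = y" by (auto simp: M_def)
    have w1: "wk E (xs @ [y] @ zs)" using less.prems M unfolding qM
      by (subst wk_app3) (auto simp: wk_app3)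
    have w2: "pw w (xs @ [y] @ zs) \<le> pw w q" using M unfolding qM
      by (subst pw_app3, simp) (subst pw_app3, auto)
    have len: "length (xs @ [y] @ zs) < length q" using q by simp
    obtain p where p: "wk E p \<and> distinct p \<and> hd p = hd (xs @ [y] @ zs) \<and> last p = last (xs @ [y] @ zs)
        \<and> set p \<subseteq> set (xs @ [y] @ zs) \<and> pw w p \<le> pw w (xs @ [y] @ zs)"
      using less.hyps[OF len w1] by blast
    have "hd (xs @ [y] @ zs) = hd q" "last (xs @ [y] @ zs) = last q" "set (xs @ [y] @ zs) \<subseteq> set q"
      using q by (auto simp: hd_append last_append)
    then show ?thesis using p w2 by (metis order_trans)
  qed
qed



lemma pe_nth: "i < length q - 1 \<Longrightarrow> {q ! i, q ! (i + 1)} \<in> path_edges q"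
  unfolding path_edges_def by blast

lemma pe_set: "{u, v} \<in> path_edges q \<Longrightarrow> v \<in> set q"
proof -
  assume "{u, v} \<in> path_edges q"
  then obtain i where i: "i < length q - 1" "{u, v} = {q ! i, q ! (i + 1)}"
    unfolding path_edges_def by blast
  then have "v = q ! i \<or> v = q ! (i + 1)" by (metis doubleton_eq_iff)
  then show ?thesis using i(1) by (metis add_lessD1 less_diff_conv nth_mem)
qed

lemma pe_drop: "path_edges (drop m q) \<subseteq> path_edges q"
proof
  fix e assume "e \<in> path_edges (drop m q)"
  then obtain i where i: "i < length (drop m q) - 1" "e = {drop m q ! i, drop m q ! (i + 1)}"
    unfolding path_edges_def by blast
  then have "m + i < length q - 1" "e = {q ! (m + i), q ! (m + i + 1)}" by auto
  then show "e \<in> path_edges q" using pe_nth by metis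
qed

lemma wk_pe: "q \<noteq> [] \<Longrightarrow> wk (path_edges q) q"
  unfolding wk_nth using pe_nth by blast

lemma nbhd_mono: "A \<subseteq> A' \<Longrightarrow> E1 \<subseteq> E2 \<Longrightarrow> closed_nbhd V E1 A \<subseteq> closed_nbhd V E2 A'"
  unfolding closed_nbhd_def by blast

lemma nbhd_finite: "finite V \<Longrightarrow> A \<subseteq> V \<Longrightarrow> finite (closed_nbhd V E A)"
proof -
  assume "finite V" "A \<subseteq> V"
  then have "closed_nbhd V E A \<subseteq> V" unfolding closed_nbhd_def by blast
  then show ?thesis using \<open>finite V\<close> finite_subset by blast
qed

lemma chord_cycle:
  assumes "wk T Q" "distinct Q" "T \<subseteq> E" "\<forall>e\<in>T. w e = 3" "a + 2 \<le> g" "g < length Q"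
    "{Q ! a, Q ! g} \<in> E"
  defines "c \<equiv> take (g - a + 1) (drop a Q)"
  shows "is_cycle E c \<and> cycle_weight w c = 3 * (g - a) + w {Q ! a, Q ! g}"
proof -
  have lc: "length c = Suc (g - a)" using assms(5,6) unfolding c_def by auto
  have cn: "\<And>i. i \<le> g - a \<Longrightarrow> c ! i = Q ! (a + i)" using assms(5,6) unfolding c_def by auto
  have Te: "\<And>j. j < length Q - 1 \<Longrightarrow> {Q ! j, Q ! (j + 1)} \<in> T" using assms(1) unfolding wk_nth by blast
  have edge: "{c ! i, c ! ((i + 1) mod length c)} \<in> (if i < g - a then T else E)" if "i < length c" for i
  proof (cases "i < g - a")
    case True
    then have "(i + 1) mod length c = i + 1" using lc by simp
    then show ?thesis using True cn[of i] cn[of "i+1"] Te[of "a + i"] assms(5,6) by simp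
  next
    case False
    then have "i = g - a" using that lc by simp
    then have "(i + 1) mod length c = 0" using lc by simp
    then show ?thesis using False cn[of i] cn[of 0] assms(5,7) \<open>i = g - a\<close> by (simp add: insert_commute)
  qed
  have cyc: "is_cycle E c"
    unfolding is_cycle_def
  proof (intro conjI allI impI)
    show "3 \<le> length c" using lc assms(5) by simp
    show "distinct c" unfolding c_def using assms(2) by simp
    fix i assume "i < length c"
    then show "{c ! i, c ! ((i + 1) mod length c)} \<in> E" using edge[of i] assms(3) by (auto split: if_splits)
  qed
  have "cycle_weight w c = (\<Sum>i < Suc (g - a). w {c ! i, c ! ((i + 1) mod length c)})"
    unfolding cycle_weight_def lc ..
  also have "\<dots> = (\<Sum>i < g - a. w {c ! i, c ! ((i + 1) mod length c)}) + w {c ! (g - a), c ! ((g - a + 1) mod length c)}"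
    by simp
  also have "(\<Sum>i < g - a. w {c ! i, c ! ((i + 1) mod length c)}) = (\<Sum>i < g - a. 3)"
  proof (rule sum.cong)
    fix i assume "i \<in> {..<g - a}"
    then have "{c ! i, c ! ((i + 1) mod length c)} \<in> T" using edge[of i] lc by auto
    then show "w {c ! i, c ! ((i + 1) mod length c)} = 3" using assms(4) by blast
  qed simp
  also have "{c ! (g - a), c ! ((g - a + 1) mod length c)} = {Q ! a, Q ! g}"
    using lc cn[of "g - a"] cn[of 0] assms(5) by (simp add: insert_commute)
  finally show ?thesis using cyc by simp
qed

lemma shortcut:
  assumes "wk T Q" "T \<subseteq> E" "\<forall>e\<in>T. w e = 3" "a \<le> g" "g < length Q" "{Q ! a, Q ! g} \<in> E"
  shows "wk E (take (a + 1) Q @ drop g Q) \<and> pw w (take (a + 1) Q @ drop g Q) = 3 * a + w {Q ! a, Q ! g} + 3 * (length Q - 1 - g)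
    \<and> hd (take (a + 1) Q @ drop g Q) = hd Q \<and> last (take (a + 1) Q @ drop g Q) = last Q"
proof -
  have ne1: "take (a + 1) Q \<noteq> []" and ne2: "drop g Q \<noteq> []" using assms(4,5) by auto
  have w1: "wk T (take (a + 1) Q)" using wk_take assms(1) by auto
  have w2: "wk T (drop g Q)" using wk_drop assms(1,5) by auto
  have l1: "last (take (a + 1) Q) = Q ! a"
  proof -
    have "a < length Q" using assms(4,5) by simp
    then have "take (a + 1) Q = take a Q @ [Q ! a]" by (simp add: take_Suc_conv_app_nth)
    then show ?thesis by simp
  qed
  have h2: "hd (drop g Q) = Q ! g" using assms(5) by (simp add: hd_drop_conv_nth)
  have "wk E (take (a + 1) Q @ drop g Q)"
    using wk_append[OF ne1 ne2] wk_mono[OF w1 assms(2)] wk_mono[OF w2 assms(2)] l1 h2 assms(6) by simp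
  moreover have "pw w (take (a + 1) Q @ drop g Q) = 3 * a + w {Q ! a, Q ! g} + 3 * (length Q - 1 - g)"
    using pw_append[OF ne1 ne2] pw_T[OF w1 assms(3)] pw_T[OF w2 assms(3)] l1 h2 assms(4,5) by simp
  moreover have "hd (take (a + 1) Q @ drop g Q) = hd Q" using ne1 by (cases Q) auto
  moreover have "last (take (a + 1) Q @ drop g Q) = last Q" using ne2 by simp
  ultimately show ?thesis by blast
qed



context
  fixes V :: "'a set" and E T :: "'a set set" and w :: "'a set \<Rightarrow> nat"
  assumes G: "graph V E" and TE: "T \<subseteq> E" and Tc: "connected_on V T"
    and wT: "\<forall>e\<in>T. w e = 3" and wE: "\<forall>e\<in>E. w e \<in> {3, 4, 5}"
begin

lemma edgeV: "{u, v} \<in> E \<Longrightarrow> u \<in> V \<and> v \<in> V"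
proof -
  assume "{u, v} \<in> E"
  then obtain a b where "{u, v} = {a, b}" "a \<in> V" "b \<in> V" using G unfolding graph_def by blast
  then show ?thesis by (metis doubleton_eq_iff)
qed

lemma wle5: "e \<in> E \<Longrightarrow> w e \<le> 5" using wE by fastforce
lemma wge3: "e \<in> E \<Longrightarrow> 3 \<le> w e" using wE by fastforce

definition NB :: "'a list \<Rightarrow> 'a set" where
  "NB P = closed_nbhd V (T \<union> path_edges P) (set P)"

lemma NB_drop: "NB (drop m P) \<subseteq> NB P"
  unfolding NB_def using pe_drop[of m P] set_drop_subset[of m P] by (intro nbhd_mono) blast+

lemma NB_finite: "set P \<subseteq> V \<Longrightarrow> finite (NB P)"
  unfolding NB_def using nbhd_finite G graph_def by blast

lemma NB_sub: "set P \<subseteq> NB P"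
  unfolding NB_def closed_nbhd_def by blast

definition GOAL :: "'a list \<Rightarrow> bool" where
  "GOAL P \<longleftrightarrow> (\<exists>q. wk E q \<and> hd q = hd P \<and> last q = last P \<and> pw w q + 4 \<le> 3 * card (NB P))
     \<or> (\<exists>c. is_cycle E c \<and> odd (cycle_weight w c) \<and> cycle_weight w c \<le> 3 * card (NB P))"

lemma GOAL_mono:
  assumes "(\<exists>c. is_cycle E c \<and> odd (cycle_weight w c) \<and> cycle_weight w c \<le> 3 * m)" "m \<le> card (NB P)"
  shows "GOAL P"
  using assms unfolding GOAL_def by (meson le_trans mult_le_mono2)

lemma main:
  "P \<noteq> [] \<Longrightarrow> distinct P \<Longrightarrow> path_edges P \<subseteq> E \<Longrightarrow> set P \<subseteq> V \<Longrightarrow> set P \<noteq> V \<Longrightarrow> GOAL P"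
proof (induction "length P" arbitrary: P rule: less_induct)
  case less
  note Pne = less.prems(1) and Pd = less.prems(2) and PE = less.prems(3) and PV = less.prems(4) and PnV = less.prems(5)
  define x where "x = hd P"
  define N where "N = NB P"
  define C where "C = {v. \<exists>q. wk T q \<and> hd q = x \<and> last q = v \<and> set q \<subseteq> N}"
  have finN: "finite N" unfolding N_def using NB_finite PV by blast
  have SN: "set P \<subseteq> N" unfolding N_def by (rule NB_sub)
  have NV: "N \<subseteq> V" unfolding N_def NB_def closed_nbhd_def using PV by blast
  have x0: "P ! 0 = x" unfolding x_def using Pne by (simp add: hd_conv_nth)
  have xS: "x \<in> set P" unfolding x_def using Pne by simp
  have xC: "x \<in> C" unfolding C_def using xS SN by (intro CollectI exI[of _ "[x]"]) auto
  have CN: "C \<subseteq> N"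
  proof
    fix v assume "v \<in> C"
    then obtain q where q: "wk T q" "last q = v" "set q \<subseteq> N" unfolding C_def by blast
    then have "q \<noteq> []" by auto
    then show "v \<in> N" using q by auto
  qed
  have finC: "finite C" using finN CN finite_subset by blast
  have clos: "u \<in> C" if vC: "v \<in> C" and vu: "{v, u} \<in> T" and uN: "u \<in> N" for u v
  proof -
    obtain q where q: "wk T q" "hd q = x" "last q = v" "set q \<subseteq> N" using vC unfolding C_def by blast
    have "q \<noteq> []" using q(1) by auto
    then have "wk T (q @ [u])" using q vu wk_append[of q "[u]" T] by simp
    moreover have "hd (q @ [u]) = x" using q \<open>q \<noteq> []\<close> by simp
    ultimately show ?thesis unfolding C_def using q(4) uN by (intro CollectI exI[of _ "q @ [u]"]) auto
  qed
  have pref: "set q \<subseteq> C" if q1: "wk T q" and q2: "hd q = x" and q3: "set q \<subseteq> N" for q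
  proof
    fix v assume "v \<in> set q"
    then obtain i where i: "i < length q" "q ! i = v" by (meson in_set_conv_nth)
    have "wk T (take (i + 1) q)" using wk_take q1 by auto
    moreover have "hd (take (i + 1) q) = x" using q2 i(1) by (cases q) auto
    moreover have "last (take (i + 1) q) = v" using i by (simp add: take_Suc_conv_app_nth)
    moreover have "set (take (i + 1) q) \<subseteq> N" using q3 by (meson order_trans set_take_subset)
    ultimately show "v \<in> C" unfolding C_def by blast
  qed
  have zex: "\<exists>z \<in> C. z \<notin> set P"
  proof (rule ccontr)
    assume "\<not> ?thesis"
    then have CS: "C \<subseteq> set P" by blast
    obtain v0 where v0: "v0 \<in> V" "v0 \<notin> set P" using PV PnV by blast
    have "x \<in> V" using xS PV by blast
    then obtain r where r: "is_path T r" "hd r = x" "last r = v0" using Tc v0(1) unfolding connected_on_def by blast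
    have "wk T r" using r(1) is_path_wk by blast
    then obtain u u' where uu: "{u, u'} \<in> T" "u \<in> C" "u' \<notin> C"
      using wk_exit[of T r C] r xC v0 CS by blast
    have "u \<in> set P" using uu CS by blast
    moreover have "u' \<in> V" using edgeV uu(1) TE by blast
    ultimately have "u' \<in> N" unfolding N_def NB_def closed_nbhd_def using uu(1) by blast
    then show False using clos uu by blast
  qed
  then obtain z where zC: "z \<in> C" and zS: "z \<notin> set P" by blast
  define I where "I = {i. i < length P \<and> P ! i \<in> C}"
  have finI: "finite I" unfolding I_def by simp
  have I0: "0 \<in> I" unfolding I_def using Pne x0 xC by simp
  define b where "b = Max I"
  have bI: "b \<in> I" unfolding b_def using finI I0 Max_in by blast
  have bmax: "\<And>i. i \<in> I \<Longrightarrow> i \<le> b" unfolding b_def using finI by simp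
  have bl: "b < length P" and bC: "P ! b \<in> C" using bI unfolding I_def by auto
  obtain Q where Q: "wk T Q" "distinct Q" "hd Q = x" "last Q = P ! b" "set Q \<subseteq> C"
  proof -
    obtain q where q: "wk T q" "hd q = x" "last q = P ! b" "set q \<subseteq> N" using bC unfolding C_def by blast
    obtain p where p: "wk T p" "distinct p" "hd p = hd q" "last p = last q" "set p \<subseteq> set q"
      using walk_to_path[OF q(1), of w] by blast
    have "set p \<subseteq> C" using pref[OF p(1)] p q by (metis order_trans)
    then show ?thesis using that p q by simp
  qed

  have Qne: "Q \<noteq> []" using Q(1) by auto
  define L where "L = length Q - 1"
  have lenQ: "length Q = L + 1" using Qne L_def by simp
  have Q0: "Q ! 0 = x" using Q(3) Qne by (simp add: hd_conv_nth)
  have QL: "Q ! L = P ! b" using Q(4) Qne L_def by (simp add: last_conv_nth)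
  have lenQC: "length Q \<le> card C"
    using Q(2,5) finC by (metis card_mono distinct_card)
  have pwQ: "pw w Q = 3 * L" using pw_T[OF Q(1) wT] L_def by simp
  have QE: "wk E Q" using wk_mono Q(1) TE by blast
  have PbS: "P ! b \<in> set P" using bl by simp
  have cross: "(\<exists>a g. a + 2 \<le> g \<and> g < length Q \<and> {Q ! a, Q ! g} \<in> path_edges P)
      \<or> (\<exists>a e. a + 2 \<le> L \<and> Q ! a = P ! e \<and> e + 1 \<le> b \<and> P ! (e + 1) \<notin> C)" if HQ: "set Q = C"
  proof -
    obtain \<beta> where \<beta>: "\<beta> < length Q" "Q ! \<beta> = z" using zC HQ by (metis in_set_conv_nth)
    have "\<beta> \<noteq> 0" using \<beta> Q0 zS xS by (metis)
    have "\<beta> \<noteq> L" using \<beta> QL zS PbS by auto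
    then have \<beta>L: "\<beta> < L" using \<beta> lenQ by simp
    define J where "J = {i. i \<le> b \<and> (\<exists>g. g < length Q \<and> Q ! g = P ! i \<and> \<beta> < g)}"
    have bJ: "b \<in> J" unfolding J_def using lenQ QL \<beta>L by auto
    define i0 where "i0 = (LEAST i. i \<in> J)"
    have i0J: "i0 \<in> J" using bJ LeastI unfolding i0_def by metis
    have i0min: "\<And>i. i \<in> J \<Longrightarrow> i0 \<le> i" unfolding i0_def by (simp add: Least_le)
    obtain g where g: "g < length Q" "Q ! g = P ! i0" "\<beta> < g" and i0b: "i0 \<le> b" using i0J unfolding J_def by blast
    have below: "\<exists>a. a < \<beta> \<and> Q ! a = P ! j" if jl: "j < i0" and jC: "P ! j \<in> C" for j
    proof -
      obtain a where a: "a < length Q" "Q ! a = P ! j" using HQ jC by (metis in_set_conv_nth)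
      have "j < length P" using jl i0b bl by simp
      then have "P ! j \<in> set P" by simp
      then have "a \<noteq> \<beta>" using a \<beta> zS by auto
      moreover have "\<not> \<beta> < a"
      proof
        assume "\<beta> < a"
        then have "j \<in> J" unfolding J_def using a jl i0b by auto
        then show False using i0min jl by fastforce
      qed
      ultimately show ?thesis using a by (intro exI[of _ a]) simp
    qed
    have "i0 \<noteq> 0"
    proof
      assume "i0 = 0"
      then have "Q ! g = Q ! 0" using g(2) x0 Q0 by simp
      then have "g = 0" using Q(2) g(1) Qne by (simp add: nth_eq_iff_index_eq)
      then show False using g(3) by simp
    qed
    show ?thesis
    proof (cases "\<forall>j \<le> i0. P ! j \<in> C")
      case True
      then have "P ! (i0 - 1) \<in> C" by simp
      then obtain a where a: "a < \<beta>" "Q ! a = P ! (i0 - 1)" using below \<open>i0 \<noteq> 0\<close> by (meson diff_less zero_less_one not_gr_zero)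
      have "i0 - 1 < length P - 1" using i0b bl \<open>i0 \<noteq> 0\<close> by simp
      then have "{P ! (i0 - 1), P ! (i0 - 1 + 1)} \<in> path_edges P" by (rule pe_nth)
      then have "{Q ! a, Q ! g} \<in> path_edges P" using a g \<open>i0 \<noteq> 0\<close> by simp
      moreover have "a + 2 \<le> g" using a g by simp
      ultimately show ?thesis using g(1) by blast
    next
      case False
      then obtain j where j: "j \<le> i0" "P ! j \<notin> C" by blast
      define j0 where "j0 = (LEAST j. j \<le> i0 \<and> P ! j \<notin> C)"
      have j0P: "j0 \<le> i0 \<and> P ! j0 \<notin> C" unfolding j0_def using j by (metis (mono_tags, lifting) LeastI)
      have j0min: "\<And>j. j \<le> i0 \<Longrightarrow> P ! j \<notin> C \<Longrightarrow> j0 \<le> j" unfolding j0_def by (simp add: Least_le)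
      have "j0 \<noteq> 0" using j0P x0 xC by metis
      define e where "e = j0 - 1"
      have e1: "e + 1 = j0" using \<open>j0 \<noteq> 0\<close> e_def by simp
      have "P ! e \<in> C" using j0min[of e] e1 j0P by fastforce
      moreover have "e < i0" using e1 j0P by simp
      ultimately obtain a where a: "a < \<beta>" "Q ! a = P ! e" using below by blast
      have "a + 2 \<le> L" using a \<beta>L by simp
      moreover have "e + 1 \<le> b" using e1 j0P i0b by simp
      ultimately show ?thesis using a e1 j0P by blast
    qed
  qed

  have IHd: "GOAL (drop m P)" if "0 < m" "m < length P" for m
  proof (rule less.hyps)
    show "length (drop m P) < length P" using that by simp
    show "drop m P \<noteq> []" using that by simp
    show "distinct (drop m P)" using Pd by simp
    show "path_edges (drop m P) \<subseteq> E" using pe_drop PE by blast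
    show "set (drop m P) \<subseteq> V" using PV set_drop_subset by (metis order_trans)
    show "set (drop m P) \<noteq> V" using PV PnV set_drop_subset[of m P] by blast
  qed
  have hdP: "hd P = x" using x_def by simp
  show "GOAL P"
  proof (cases "b = length P - 1")
    case True
    have lastP: "last P = P ! b" using True Pne by (simp add: last_conv_nth)
    show ?thesis
    proof (cases "length Q < card N")
      case True
      then have "pw w Q + 4 \<le> 3 * card N" using pwQ lenQ by simp
      then show ?thesis unfolding GOAL_def N_def[symmetric] using QE Q(3,4) hdP lastP by metis
    next
      case False
      have "card (set Q) = length Q" using Q(2) by (simp add: distinct_card)
      moreover have "set Q \<subseteq> N" using Q(5) CN by blast
      ultimately have QN: "set Q = N" using False finN by (metis card_seteq not_less)
      then have HQ: "set Q = C" using Q(5) CN by blast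
      have cN: "card N = L + 1" using QN lenQ Q(2) by (metis distinct_card)
      from cross[OF HQ] show ?thesis
      proof
        assume "\<exists>a g. a + 2 \<le> g \<and> g < length Q \<and> {Q ! a, Q ! g} \<in> path_edges P"
        then obtain a g where ag: "a + 2 \<le> g" "g < length Q" "{Q ! a, Q ! g} \<in> path_edges P" by blast
        have eE: "{Q ! a, Q ! g} \<in> E" using ag PE by blast
        have sc: "wk E (take (a + 1) Q @ drop g Q) \<and> pw w (take (a + 1) Q @ drop g Q) = 3 * a + w {Q ! a, Q ! g} + 3 * (length Q - 1 - g) \<and> hd (take (a + 1) Q @ drop g Q) = hd Q \<and> last (take (a + 1) Q @ drop g Q) = last Q"
          using shortcut[OF Q(1) TE wT _ ag(2) eE] ag(1) by simp
        have "w {Q ! a, Q ! g} \<le> 5" using wle5 eE by blast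
        then have "pw w (take (a + 1) Q @ drop g Q) + 4 \<le> 3 * card N" using sc cN lenQ ag(1,2) by simp
        then show ?thesis unfolding GOAL_def N_def[symmetric] using sc Q(3,4) hdP lastP by metis
      next
        assume "\<exists>a e. a + 2 \<le> L \<and> Q ! a = P ! e \<and> e + 1 \<le> b \<and> P ! (e + 1) \<notin> C"
        then obtain e where "e + 1 \<le> b" "P ! (e + 1) \<notin> C" by blast
        moreover have "P ! (e + 1) \<in> N" using SN bl \<open>e + 1 \<le> b\<close> by (meson le_less_trans nth_mem subsetD)
        ultimately show ?thesis using HQ QN by blast
      qed
    qed
  next
    case False
    then have bl2: "b + 1 < length P" using bl by simp
    define P2 where "P2 = drop (b + 1) P"
    define N2 where "N2 = NB P2"
    have G2: "GOAL P2" unfolding P2_def using IHd bl2 by simp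
    have hd2: "hd P2 = P ! (b + 1)" unfolding P2_def using bl2 by (simp add: hd_drop_conv_nth)
    have last2: "last P2 = last P" unfolding P2_def using bl2 by simp
    have N2N: "N2 \<subseteq> N" unfolding N2_def N_def P2_def by (rule NB_drop)
    have finN2: "finite N2" using N2N finN finite_subset by blast
    have inP2: "\<exists>m. b < m \<and> m < length P \<and> v = P ! m" if vP2: "v \<in> set P2" for v
    proof -
      obtain i where "i < length P2" "P2 ! i = v" using vP2 by (meson in_set_conv_nth)
      then show ?thesis unfolding P2_def using bl2 by (intro exI[of _ "b + 1 + i"]) auto
    qed
    have notC: "P ! m \<notin> C" if "b < m" "m < length P" for m
      using bmax[of m] that unfolding I_def by auto
    have N2cases: "v \<in> set P2 \<or> (\<exists>u \<in> set P2. {u, v} \<in> T)" if "v \<in> N2" for v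
    proof -
      have "v \<in> set P2 \<or> (\<exists>u \<in> set P2. {u, v} \<in> T \<union> path_edges P2)"
        using that unfolding N2_def NB_def closed_nbhd_def by blast
      then show ?thesis using pe_set[of _ v P2] by blast
    qed
    have disj: "C \<inter> N2 = {}"
    proof (rule ccontr)
      assume "C \<inter> N2 \<noteq> {}"
      then obtain v where v: "v \<in> C" "v \<in> N2" by blast
      from N2cases[OF v(2)] show False
      proof
        assume "v \<in> set P2"
        then show False using inP2 notC v(1) by blast
      next
        assume "\<exists>u \<in> set P2. {u, v} \<in> T"
        then obtain u where u: "u \<in> set P2" "{u, v} \<in> T" by blast
        obtain m where m: "b < m" "m < length P" "u = P ! m" using inP2[OF u(1)] by blast
        have "u \<in> N" using m SN by (metis nth_mem subsetD)
        then have "u \<in> C" using clos[OF v(1)] u(2) by (simp add: insert_commute)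
        then show False using notC m by blast
      qed
    qed
    have cardCN2: "card C + card N2 \<le> card N"
      using card_Un_disjoint[OF finC finN2 disj] card_mono[OF finN, of "C \<union> N2"] CN N2N by simp
    have b1N2: "P ! (b + 1) \<in> N2" unfolding N2_def P2_def using NB_sub bl2 hd2
      by (metis P2_def drop_eq_Nil hd_in_set not_less subsetD)
    have cN2: "1 \<le> card N2" using b1N2 finN2 by (metis One_nat_def Suc_leI card_gt_0_iff empty_iff)
    have ebE: "{P ! b, P ! (b + 1)} \<in> E" using pe_nth[of b P] bl2 PE by auto
    have wb: "w {P ! b, P ! (b + 1)} \<le> 5" using wle5 ebE by blast
    show ?thesis
    proof (cases "\<exists>c. is_cycle E c \<and> odd (cycle_weight w c) \<and> cycle_weight w c \<le> 3 * card N2")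
      case True
      then show ?thesis using GOAL_mono[of "card N2" P] N2N card_mono[OF finN] N_def by blast
    next
      case False
      then obtain R2 where R2: "wk E R2" "hd R2 = P ! (b + 1)" "last R2 = last P" "pw w R2 + 4 \<le> 3 * card N2"
        using G2 unfolding GOAL_def N2_def[symmetric] hd2 last2 by blast
      have R2ne: "R2 \<noteq> []" using R2(1) by auto
      have wkQR: "wk E (Q @ R2)" using wk_append[OF Qne R2ne] QE R2 Q(4) ebE by simp
      have pwQR: "pw w (Q @ R2) = 3 * L + w {P ! b, P ! (b + 1)} + pw w R2"
        using pw_append[OF Qne R2ne] pwQ R2 Q(4) by simp
      have hdQR: "hd (Q @ R2) = hd P" using Qne Q(3) hdP by simp
      have lastQR: "last (Q @ R2) = last P" using R2ne R2(3) by simp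
      show ?thesis
      proof (cases "length Q < card C \<or> card C + card N2 < card N")
        case True
        then have "pw w (Q @ R2) + 4 \<le> 3 * card N" using pwQR wb R2(4) lenQ lenQC cardCN2 by linarith
        then show ?thesis unfolding GOAL_def N_def[symmetric] using wkQR hdQR lastQR by metis
      next
        case False
        then have lQC: "length Q = card C" and cCN: "card C + card N2 = card N" using lenQC cardCN2 by simp_all
        have "card (set Q) = length Q" using Q(2) by (simp add: distinct_card)
        then have HQ: "set Q = C" using lQC Q(5) finC by (metis card_seteq order_refl)
        have "card (C \<union> N2) = card N" using card_Un_disjoint[OF finC finN2 disj] cCN by simp
        then have NCN2: "C \<union> N2 = N" using CN N2N finN by (metis Un_least card_seteq order_refl)
        from cross[OF HQ] show ?thesis
        proof
          assume "\<exists>a g. a + 2 \<le> g \<and> g < length Q \<and> {Q ! a, Q ! g} \<in> path_edges P"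
          then obtain a g where ag: "a + 2 \<le> g" "g < length Q" "{Q ! a, Q ! g} \<in> path_edges P" by blast
          have eE: "{Q ! a, Q ! g} \<in> E" using ag PE by blast
          have w35: "3 \<le> w {Q ! a, Q ! g}" "w {Q ! a, Q ! g} \<le> 5" using wle5 wge3 eE by auto
          define c where "c = take (g - a + 1) (drop a Q)"
          have cyc: "is_cycle E c \<and> cycle_weight w c = 3 * (g - a) + w {Q ! a, Q ! g}"
            unfolding c_def by (rule chord_cycle[OF Q(1) Q(2) TE wT ag(1) ag(2) eE])
          show ?thesis
          proof (cases "odd (cycle_weight w c)")
            case True
            have "cycle_weight w c \<le> 3 * card N" using cyc w35 ag lenQ lQC cCN cN2 by linarith
            then show ?thesis unfolding GOAL_def N_def[symmetric] using cyc True by blast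
          next
            case False
            then have ev: "even (3 * (g - a) + w {Q ! a, Q ! g})" using cyc by simp
            have key: "w {Q ! a, Q ! g} + 2 \<le> 3 * (g - a)"
            proof -
              have "2 \<le> g - a" using ag by simp
              then show ?thesis using ev w35 by presburger
            qed
            have sc: "wk E (take (a + 1) Q @ drop g Q) \<and> pw w (take (a + 1) Q @ drop g Q) = 3 * a + w {Q ! a, Q ! g} + 3 * (length Q - 1 - g) \<and> hd (take (a + 1) Q @ drop g Q) = hd Q \<and> last (take (a + 1) Q @ drop g Q) = last Q"
              using shortcut[OF Q(1) TE wT _ ag(2) eE] ag(1) by simp
            define W1 where "W1 = take (a + 1) Q @ drop g Q"
            have W1ne: "W1 \<noteq> []" unfolding W1_def using Qne by simp
            have wk1: "wk E (W1 @ R2)" using wk_append[OF W1ne R2ne] sc R2 Q(4) ebE unfolding W1_def by simp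
            have pw1: "pw w (W1 @ R2) = 3 * a + w {Q ! a, Q ! g} + 3 * (length Q - 1 - g) + w {P ! b, P ! (b + 1)} + pw w R2"
              using pw_append[OF W1ne R2ne] sc R2 Q(4) unfolding W1_def by simp
            have "pw w (W1 @ R2) + 4 \<le> 3 * card N" using pw1 key wb R2(4) ag lenQ lQC cCN by linarith
            moreover have "hd (W1 @ R2) = hd P" using sc W1ne Q(3) hdP unfolding W1_def by simp
            moreover have "last (W1 @ R2) = last P" using R2ne R2(3) by simp
            ultimately show ?thesis unfolding GOAL_def N_def[symmetric] using wk1 by metis
          qed
        next
          assume "\<exists>a e. a + 2 \<le> L \<and> Q ! a = P ! e \<and> e + 1 \<le> b \<and> P ! (e + 1) \<notin> C"
          then obtain a e where ae: "a + 2 \<le> L" "Q ! a = P ! e" "e + 1 \<le> b" "P ! (e + 1) \<notin> C" by blast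
          have e1l: "e + 1 < length P" using ae(3) bl by simp
          have "P ! (e + 1) \<in> N" using SN e1l by (meson nth_mem subsetD)
          then have inN2: "P ! (e + 1) \<in> N2" using NCN2 ae(4) by blast
          have notP2: "P ! (e + 1) \<notin> set P2"
          proof
            assume "P ! (e + 1) \<in> set P2"
            then obtain m where m: "b < m" "m < length P" "P ! (e + 1) = P ! m" using inP2 by blast
            then have "e + 1 = m" using Pd e1l by (simp add: nth_eq_iff_index_eq)
            then show False using m ae(3) by simp
          qed
          obtain u where u: "u \<in> set P2" "{u, P ! (e + 1)} \<in> T" using N2cases[OF inN2] notP2 by blast
          obtain m where m: "b < m" "m < length P" "u = P ! m" using inP2[OF u(1)] by blast
          have G3: "GOAL (drop m P)" using IHd m by simp
          have "drop m P = drop (m - (b + 1)) P2" unfolding P2_def using m by simp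
          then have N3N2: "NB (drop m P) \<subseteq> N2" unfolding N2_def by (metis NB_drop)
          have cN3: "card (NB (drop m P)) \<le> card N2" using N3N2 finN2 by (simp add: card_mono)
          show ?thesis
          proof (cases "\<exists>c. is_cycle E c \<and> odd (cycle_weight w c) \<and> cycle_weight w c \<le> 3 * card (NB (drop m P))")
            case True
            have "card (NB (drop m P)) \<le> card (NB P)" using cN3 card_mono[OF finN N2N] N_def by simp
            then show ?thesis using GOAL_mono True by blast
          next
            case False
            have hd3: "hd (drop m P) = u" using m by (simp add: hd_drop_conv_nth)
            have last3: "last (drop m P) = last P" using m by simp
            obtain R3 where R3: "wk E R3" "hd R3 = u" "last R3 = last P" "pw w R3 + 4 \<le> 3 * card (NB (drop m P))"
              using G3 False unfolding GOAL_def hd3 last3 by blast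
            have R3ne: "R3 \<noteq> []" using R3(1) by auto
            define xs where "xs = take (a + 1) Q"
            have xsne: "xs \<noteq> []" unfolding xs_def using Qne by simp
            have wxs: "wk T xs" unfolding xs_def using wk_take Q(1) by auto
            have lxs: "last xs = P ! e"
            proof -
              have "a < length Q" using ae(1) lenQ by simp
              then have "xs = take a Q @ [Q ! a]" unfolding xs_def by (simp add: take_Suc_conv_app_nth)
              then show ?thesis using ae(2) by simp
            qed
            have pxs: "pw w xs = 3 * a" using pw_T[OF wxs wT] ae(1) lenQ unfolding xs_def by simp
            have hxs: "hd xs = x" using Qne Q(3) unfolding xs_def by (cases Q) auto
            have eeE: "{P ! e, P ! (e + 1)} \<in> E" using pe_nth[of e P] e1l PE by auto
            have we: "w {P ! e, P ! (e + 1)} \<le> 5" using wle5 eeE by blast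
            have euE: "{P ! (e + 1), u} \<in> E" using u(2) TE by (auto simp: insert_commute)
            have weu: "w {P ! (e + 1), u} = 3" using u(2) wT by (simp add: insert_commute)
            have wkW: "wk E (xs @ [P ! (e + 1)] @ R3)"
              using wk_app3[of "[P ! (e + 1)]" E xs R3] wk_mono[OF wxs TE] xsne R3ne R3 lxs eeE euE by simp
            have pwW: "pw w (xs @ [P ! (e + 1)] @ R3) = 3 * a + w {P ! e, P ! (e + 1)} + 3 + pw w R3"
              using pw_app3[of "[P ! (e + 1)]" w xs R3] xsne R3ne R3 lxs pxs weu by simp
            have "pw w (xs @ [P ! (e + 1)] @ R3) + 4 \<le> 3 * card N"
              using pwW we R3(4) cN3 ae(1) lenQ lQC cCN by linarith
            moreover have "hd (xs @ [P ! (e + 1)] @ R3) = hd P" using xsne hxs hdP by simp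
            moreover have "last (xs @ [P ! (e + 1)] @ R3) = last P" using R3ne R3(3) by simp
            ultimately show ?thesis unfolding GOAL_def N_def[symmetric] using wkW by metis
          qed
        qed
      qed
    qed
  qed
qed

end

theorem corollary5p2:
  fixes V :: "'a set" and E T :: "'a set set" and w :: "'a set \<Rightarrow> nat"
    and P :: "'a list" and x y :: 'a and l :: nat
  assumes "odd l" and "l \<ge> 13"
    and "graph V E"
    and "\<forall>e\<in>E. w e \<in> {3, 4, 5}"
    and "spanning_tree V E T" and "\<forall>e\<in>T. w e = 3"
    and "is_path E P" and "E = T \<union> path_edges P" and "set P \<noteq> V"
    and "hd P = x" and "last P = y"
    and "\<forall>c. is_cycle E c \<and> odd (cycle_weight w c) \<longrightarrow> cycle_weight w c \<ge> l + 4"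
    and "\<forall>q. is_path E q \<and> hd q = x \<and> last q = y \<longrightarrow> path_weight w q \<ge> l"
  shows "real (card (closed_nbhd V E (set P))) \<ge> real l / 3 + 4 / 3"
proof -
  note G = assms(3) and wE = assms(4) and wT = assms(6)
  have TE: "T \<subseteq> E" and Tc: "connected_on V T" using assms(5) unfolding spanning_tree_def by auto
  have Pw: "wk E P" and Pd: "distinct P" using assms(7) is_path_wk by auto
  have Pne: "P \<noteq> []" using Pw by auto
  have PE: "path_edges P \<subseteq> E" using assms(8) by blast
  have "l \<le> path_weight w P" using assms(7,10,11,13) by blast
  then have "pw w P \<noteq> 0" using assms(2) path_weight_pw by (metis le_zero_eq not_numeral_le_zero)
  then have len2: "2 \<le> length P" using Pne by (cases P; cases "tl P") auto
  have PV: "set P \<subseteq> V"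
  proof
    fix v assume "v \<in> set P"
    then obtain i where i: "i < length P" "P ! i = v" by (meson in_set_conv_nth)
    show "v \<in> V"
    proof (cases "i < length P - 1")
      case True
      then have "{P ! i, P ! (i + 1)} \<in> E" using pe_nth PE by blast
      then show ?thesis using edgeV[OF G TE Tc wT wE] i by blast
    next
      case False
      then have "i - 1 < length P - 1" "i - 1 + 1 = i" using i len2 by auto
      then have "{P ! (i - 1), P ! i} \<in> E" using pe_nth[of "i - 1" P] PE by auto
      then show ?thesis using edgeV[OF G TE Tc wT wE] i by blast
    qed
  qed
  have GP: "GOAL V E T w P" using main[OF G TE Tc wT wE Pne Pd PE PV assms(9)] .
  have NBeq: "NB V T P = closed_nbhd V E (set P)" using NB_def[OF G TE Tc wT wE] assms(8) by simp
  have "l + 4 \<le> 3 * card (closed_nbhd V E (set P))"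
    using GP unfolding GOAL_def[OF G TE Tc wT wE] NBeq
  proof
    assume "\<exists>q. wk E q \<and> hd q = hd P \<and> last q = last P \<and> pw w q + 4 \<le> 3 * card (closed_nbhd V E (set P))"
    then obtain q where q: "wk E q" "hd q = x" "last q = y" "pw w q + 4 \<le> 3 * card (closed_nbhd V E (set P))"
      using assms(10,11) by blast
    obtain p where p: "wk E p" "distinct p" "hd p = x" "last p = y" "pw w p \<le> pw w q"
      using walk_to_path[OF q(1), of w] q by auto
    have "is_path E p" using p is_path_wk by blast
    then have "l \<le> pw w p" using assms(13) p path_weight_pw by metis
    then show ?thesis using p(5) q(4) by linarith
  next
    assume "\<exists>c. is_cycle E c \<and> odd (cycle_weight w c) \<and> cycle_weight w c \<le> 3 * card (closed_nbhd V E (set P))"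
    then show ?thesis using assms(12) by force
  qed
  then show ?thesis by linarith
qed

end
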